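(* Let $(X,T)$ be a topological dynamical system and $\mu$ a $T$-invariant Borel probability measure on $X$. The following are equivalent: (1) $\mu$ has bounded complexity with respect to $\{\hat d_n\}$; (2) $T$ is $\mu$-equicontinuous in the mean; (3) $T$ is $\mu$-mean equicontinuous.
   Context: A t.d.s. $(X,T)$ consists of a compact metric space $(X,d)$ and a continuous map $T\colon X\to X$. Let $\bar d_n(x,y)=\frac1n\sum_{i=0}^{n-1}d(T^ix,T^iy)$, $\hat d_n(x,y)=\max\{\bar d_k(x,y)\colon1\le k\le n\}$, $B_{\hat d_n}(x,\varepsilon)=\{y\colon\hat d_n(x,y)<\varepsilon\}$, and $\widehat{\mathrm{span}}_\mu(n,\varepsilon)=\min\{\#(F)\colon F\subset X,\ \mu(\bigcup_{x\in F}B_{\hat d_n}(x,\varepsilon))>1-\varepsilon\}$. $\mu$ has bounded complexity with respect to $\{\hat d_n\}$ if for every $\varepsilon>0$ there is a positive integer $C$ with $\widehat{\mathrm{span}}_\mu(n,\varepsilon)\le C$ for all $n\ge1$. A set $K\subset X$ is equicontinuous in the mean if for every $\varepsilon>0$ there is $\delta>0$ with $\hat d_n(x,y)<\varepsilon$ for all $n\ge1$ and all $x,y\in K$ with $d(x,y)<\delta$; $K$ is mean equicontinuous if for every $\varepsilon>0$ there is $\delta>0$ with $\limsup_{n\to\infty}\bar d_n(x,y)<\varepsilon$ for all $x,y\in K$ with $d(x,y)<\delta$. $T$ is $\mu$-equicontinuous in the mean (resp. $\mu$-mean equicontinuous) if for every $\tau>0$ there is a measurable $K\subset X$ with $\mu(K)>1-\tau$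 which is equicontinuous in the mean (resp. mean equicontinuous). *)

theory Defs
  imports "HOL-Analysis.Analysis" "HOL-Probability.Probability"
begin

definition tds :: "'a::metric_space set \<Rightarrow> ('a \<Rightarrow> 'a) \<Rightarrow> bool" where
  "tds X T \<longleftrightarrow> compact X \<and> continuous_on X T \<and> T ` X \<subseteq> X"

definition invariant_measure :: "'a measure \<Rightarrow> ('a \<Rightarrow> 'a) \<Rightarrow> bool" where
  "invariant_measure \<mu> T \<longleftrightarrow> T \<in> measurable \<mu> \<mu> \<and>
     (\<forall>A\<in>sets \<mu>. measure \<mu> (T -` A \<inter> space \<mu>) = measure \<mu> A)"

definition dbar :: "('a::metric_space \<Rightarrow> 'a) \<Rightarrow> nat \<Rightarrow> 'a \<Rightarrow> 'a \<Rightarrow> real" where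
  "dbar T n x y = (1 / real n) * (\<Sum>i<n. dist ((T ^^ i) x) ((T ^^ i) y))"

definition dhat :: "('a::metric_space \<Rightarrow> 'a) \<Rightarrow> nat \<Rightarrow> 'a \<Rightarrow> 'a \<Rightarrow> real" where
  "dhat T n x y = Max ((\<lambda>k. dbar T k x y) ` {1..n})"

definition ball_hat :: "'a::metric_space set \<Rightarrow> ('a \<Rightarrow> 'a) \<Rightarrow> nat \<Rightarrow> 'a \<Rightarrow> real \<Rightarrow> 'a set" where
  "ball_hat X T n x \<epsilon> = {y \<in> X. dhat T n x y < \<epsilon>}"

definition span_hat :: "'a::metric_space measure \<Rightarrow> 'a set \<Rightarrow> ('a \<Rightarrow> 'a) \<Rightarrow> nat \<Rightarrow> real \<Rightarrow> nat" where
  "span_hat \<mu> X T n \<epsilon> = (LEAST k. \<exists>F. finite F \<and> F \<subseteq> X \<and> card F = k \<and>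
       measure \<mu> (\<Union>x\<in>F. ball_hat X T n x \<epsilon>) > 1 - \<epsilon>)"

definition bounded_complexity :: "'a::metric_space measure \<Rightarrow> 'a set \<Rightarrow> ('a \<Rightarrow> 'a) \<Rightarrow> bool" where
  "bounded_complexity \<mu> X T \<longleftrightarrow>
     (\<forall>\<epsilon>>0. \<exists>C::nat. C > 0 \<and> (\<forall>n\<ge>1. span_hat \<mu> X T n \<epsilon> \<le> C))"

definition equicont_in_mean :: "('a::metric_space \<Rightarrow> 'a) \<Rightarrow> 'a set \<Rightarrow> bool" where
  "equicont_in_mean T K \<longleftrightarrow>
     (\<forall>\<epsilon>>0. \<exists>\<delta>>0. \<forall>n\<ge>1. \<forall>x\<in>K. \<forall>y\<in>K. dist x y < \<delta> \<longrightarrow> dhat T n x y < \<epsilon>)"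

definition mean_equicont :: "('a::metric_space \<Rightarrow> 'a) \<Rightarrow> 'a set \<Rightarrow> bool" where
  "mean_equicont T K \<longleftrightarrow>
     (\<forall>\<epsilon>>0. \<exists>\<delta>>0. \<forall>x\<in>K. \<forall>y\<in>K. dist x y < \<delta> \<longrightarrow>
        limsup (\<lambda>n. ereal (dbar T n x y)) < ereal \<epsilon>)"

definition mu_equicont_in_mean :: "'a::metric_space measure \<Rightarrow> ('a \<Rightarrow> 'a) \<Rightarrow> bool" where
  "mu_equicont_in_mean \<mu> T \<longleftrightarrow>
     (\<forall>\<tau>>0. \<exists>K\<in>sets \<mu>. measure \<mu> K > 1 - \<tau> \<and> equicont_in_mean T K)"

definition mu_mean_equicont :: "'a::metric_space measure \<Rightarrow> ('a \<Rightarrow> 'a) \<Rightarrow> bool" where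
  "mu_mean_equicont \<mu> T \<longleftrightarrow>
     (\<forall>\<tau>>0. \<exists>K\<in>sets \<mu>. measure \<mu> K > 1 - \<tau> \<and> mean_equicont T K)"

end

theory Submission
  imports Defs
begin


lemma dbar_nonneg: "0 \<le> dbar T n x y"
  unfolding dbar_def by (simp add: sum_nonneg)

lemma dbar_sym: "dbar T n x y = dbar T n y x"
  unfolding dbar_def by (simp add: dist_commute)

lemma dbar_triangle: "dbar T n x z \<le> dbar T n x y + dbar T n y z"
proof -
  have "(\<Sum>i<n. dist ((T ^^ i) x) ((T ^^ i) z)) \<le> (\<Sum>i<n. dist ((T ^^ i) x) ((T ^^ i) y) + dist ((T ^^ i) y) ((T ^^ i) z))"
    by (intro sum_mono dist_triangle)
  then show ?thesis unfolding dbar_def sum.distrib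
    by (simp add: divide_right_mono flip: add_divide_distrib)
qed

lemma dbar_lt:
  assumes "n \<ge> 1" "\<forall>i<n. dist ((T ^^ i) x) ((T ^^ i) y) < e"
  shows "dbar T n x y < e"
proof -
  have "(\<Sum>i<n. dist ((T ^^ i) x) ((T ^^ i) y)) < (\<Sum>i<n. e)"
    using assms by (intro sum_strict_mono) (auto simp: lessThan_empty_iff)
  then show ?thesis using assms(1) unfolding dbar_def by (simp add: field_simps)
qed

lemma dhat_le_iff: "n \<ge> 1 \<Longrightarrow> dhat T n x y \<le> c \<longleftrightarrow> (\<forall>k\<in>{1..n}. dbar T k x y \<le> c)"
  unfolding dhat_def by (subst Max_le_iff) auto

lemma dhat_less_iff: "n \<ge> 1 \<Longrightarrow> dhat T n x y < c \<longleftrightarrow> (\<forall>k\<in>{1..n}. dbar T k x y < c)"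
  unfolding dhat_def by (subst Max_less_iff) auto

lemma dbar_le_dhat: "k \<in> {1..n} \<Longrightarrow> dbar T k x y \<le> dhat T n x y"
  unfolding dhat_def by (rule Max_ge) auto

lemma dhat_sym: "dhat T n x y = dhat T n y x"
  unfolding dhat_def by (simp add: dbar_sym)

lemma dhat_triangle: assumes "n \<ge> 1" shows "dhat T n x z \<le> dhat T n x y + dhat T n y z"
  unfolding dhat_le_iff[OF assms]
proof
  fix k assume k: "k \<in> {1..n}"
  have "dbar T k x z \<le> dbar T k x y + dbar T k y z" by (rule dbar_triangle)
  also have "\<dots> \<le> dhat T n x y + dhat T n y z" using dbar_le_dhat[OF k] by (intro add_mono)
  finally show "dbar T k x z \<le> dhat T n x y + dhat T n y z" .
qed

lemma dhat_mono: assumes "1 \<le> m" "m \<le> n" shows "dhat T m x y \<le> dhat T n x y"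
  unfolding dhat_le_iff[OF assms(1)] using assms by (auto intro: dbar_le_dhat)

lemma dhat_lt_from_iter:
  assumes "n \<ge> 1" "\<forall>i<n. dist ((T ^^ i) x) ((T ^^ i) y) < e"
  shows "dhat T n x y < e"
  unfolding dhat_less_iff[OF assms(1)] using assms by (auto intro!: dbar_lt)

lemma dbar_le_from_iter:
  assumes "1 \<le> k" "k \<le> n" "\<forall>i<n. dist ((T ^^ i) x) ((T ^^ i) y) < e"
  shows "dbar T k x y < e"
  using assms by (auto intro!: dbar_lt)

locale tdsm =
  fixes X :: "'a::metric_space set" and T :: "'a \<Rightarrow> 'a" and \<mu> :: "'a measure"
  assumes tds: "tds X T"
    and ps: "prob_space \<mu>"
    and sets_eq: "sets \<mu> = sets (restrict_space borel X)"
    and space_eq: "space \<mu> = X"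
begin

lemma cmp: "compact X" and contT: "continuous_on X T" and TX: "T ` X \<subseteq> X"
  using tds unfolding tds_def by auto

lemma iter_maps: "(T ^^ i) ` X \<subseteq> X"
  by (induction i) (use TX in auto)

lemma iter_cont: "continuous_on X (T ^^ i)"
proof (induction i)
  case 0 then show ?case by (simp add: continuous_on_id)
next
  case (Suc i)
  have "continuous_on X (T \<circ> (T ^^ i))"
    by (rule continuous_on_compose[OF Suc]) (rule continuous_on_subset[OF contT iter_maps])
  then show ?case by (simp add: o_def)
qed

lemma UC_iter:
  assumes "e > 0"
  shows "\<exists>r>0. \<forall>x\<in>X. \<forall>y\<in>X. dist x y < r \<longrightarrow> (\<forall>i<n. dist ((T ^^ i) x) ((T ^^ i) y) < e)"
proof (induction n)
  case 0 then show ?case by (auto intro: exI[of _ 1])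
next
  case (Suc n)
  then obtain r where r: "r > 0" "\<forall>x\<in>X. \<forall>y\<in>X. dist x y < r \<longrightarrow> (\<forall>i<n. dist ((T ^^ i) x) ((T ^^ i) y) < e)" by blast
  have "uniformly_continuous_on X (T ^^ n)"
    by (rule compact_uniformly_continuous[OF iter_cont cmp])
  then obtain s where s: "s > 0" "\<forall>x\<in>X. \<forall>y\<in>X. dist y x < s \<longrightarrow> dist ((T ^^ n) y) ((T ^^ n) x) < e"
    unfolding uniformly_continuous_on_def using assms by metis
  show ?case
  proof (intro exI[of _ "min r s"] conjI ballI impI allI)
    fix x y i assume xy: "x \<in> X" "y \<in> X" "dist x y < min r s" and i: "i < Suc n"
    show "dist ((T ^^ i) x) ((T ^^ i) y) < e"
    proof (cases "i < n")
      case True then show ?thesis using r xy by auto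
    next
      case False then have "i = n" using i by simp
      then show ?thesis using s xy by auto
    qed
  qed (use r s in auto)
qed

lemma UC_dhat:
  assumes "e > 0" "n \<ge> 1"
  shows "\<exists>r>0. \<forall>x\<in>X. \<forall>y\<in>X. dist x y < r \<longrightarrow> dhat T n x y < e"
  using UC_iter[OF assms(1), of n] assms(2) dhat_lt_from_iter by metis

lemma cont_dbar: "continuous_on X (\<lambda>y. dbar T k x y)"
proof -
  have "continuous_on X (\<lambda>y. dist ((T ^^ i) x) ((T ^^ i) y))" for i
    using continuous_on_compose2[OF continuous_on_dist[OF continuous_on_const continuous_on_id] iter_cont[of i], of UNIV "(T ^^ i) x"] by auto
  then have "continuous_on X (\<lambda>y. \<Sum>i<k. dist ((T ^^ i) x) ((T ^^ i) y))"
    by (intro continuous_on_sum) auto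
  then show ?thesis unfolding dbar_def by (intro continuous_on_mult_left)
qed

lemma meas_cont: "continuous_on X f \<Longrightarrow> (f::'a \<Rightarrow> real) \<in> borel_measurable \<mu>"
  using borel_measurable_continuous_on_restrict[of X f] measurable_cong_sets[OF sets_eq refl] by blast

lemma meas_lt: "continuous_on X f \<Longrightarrow> {y\<in>X. (f::'a\<Rightarrow>real) y < c} \<in> sets \<mu>"
  using borel_measurable_less[OF meas_cont[of f] borel_measurable_const[of c]] space_eq by simp

lemma meas_le: "continuous_on X f \<Longrightarrow> {y\<in>X. (f::'a\<Rightarrow>real) y \<le> c} \<in> sets \<mu>"
  using borel_measurable_le[OF meas_cont[of f] borel_measurable_const[of c]] space_eq by simp

lemma meas_ge: "continuous_on X f \<Longrightarrow> {y\<in>X. c \<le> (f::'a\<Rightarrow>real) y} \<in> sets \<mu>"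
  using borel_measurable_le[OF borel_measurable_const[of c] meas_cont[of f]] space_eq by simp

lemma meas_dhat_lt: assumes "n \<ge> 1" shows "{y\<in>X. dhat T n x y < c} \<in> sets \<mu>"
proof -
  have "{y\<in>X. dhat T n x y < c} = (\<Inter>k\<in>{1..n}. {y\<in>X. dbar T k x y < c})"
    using assms by (auto simp: dhat_less_iff)
  also have "\<dots> \<in> sets \<mu>" using assms by (intro sets.finite_INT meas_lt cont_dbar) auto
  finally show ?thesis .
qed

lemma meas_dhat_le: assumes "n \<ge> 1" shows "{y\<in>X. dhat T n x y \<le> c} \<in> sets \<mu>"
proof -
  have "{y\<in>X. dhat T n x y \<le> c} = (\<Inter>k\<in>{1..n}. {y\<in>X. dbar T k x y \<le> c})"
    using assms by (auto simp: dhat_le_iff)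
  also have "\<dots> \<in> sets \<mu>" using assms by (intro sets.finite_INT meas_le cont_dbar) auto
  finally show ?thesis .
qed

lemma sets_sub: "A \<in> sets \<mu> \<Longrightarrow> A \<subseteq> X"
  using sets.sets_into_space space_eq by blast

lemma meas_X: "measure \<mu> X = 1"
  using prob_space.prob_space[OF ps] space_eq by simp

lemma fm: "finite_measure \<mu>" using ps by (simp add: prob_space_def)

end


context tdsm begin

lemma lemA:
  assumes H: "\<And>\<epsilon> \<eta>. \<epsilon> > 0 \<Longrightarrow> \<eta> > 0 \<Longrightarrow> \<exists>K\<in>sets \<mu>. measure \<mu> K \<ge> 1 - \<eta> \<and>
      (\<exists>\<delta>>0. \<forall>n\<ge>1. \<forall>x\<in>K. \<forall>y\<in>K. dist x y < \<delta> \<longrightarrow> dhat T n x y \<le> \<epsilon>)"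
  shows "mu_equicont_in_mean \<mu> T"
  unfolding mu_equicont_in_mean_def
proof (intro allI impI)
  fix \<tau> :: real assume tau: "\<tau> > 0"
  have "\<forall>m. \<exists>K\<delta>. fst K\<delta> \<in> sets \<mu> \<and> measure \<mu> (fst K\<delta>) \<ge> 1 - \<tau> / 2^(m+2) \<and> snd K\<delta> > 0 \<and>
      (\<forall>n\<ge>1. \<forall>x\<in>fst K\<delta>. \<forall>y\<in>fst K\<delta>. dist x y < snd K\<delta> \<longrightarrow> dhat T n x y \<le> 1 / real (Suc m))"
  proof
    fix m
    from H[of "1 / real (Suc m)" "\<tau> / 2^(m+2)"] tau
    obtain K \<delta> where "K\<in>sets \<mu>" "measure \<mu> K \<ge> 1 - \<tau> / 2^(m+2)" "\<delta> > 0"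
      "\<forall>n\<ge>1. \<forall>x\<in>K. \<forall>y\<in>K. dist x y < \<delta> \<longrightarrow> dhat T n x y \<le> 1 / real (Suc m)" by auto
    then show "\<exists>K\<delta>. fst K\<delta> \<in> sets \<mu> \<and> measure \<mu> (fst K\<delta>) \<ge> 1 - \<tau> / 2^(m+2) \<and> snd K\<delta> > 0 \<and>
      (\<forall>n\<ge>1. \<forall>x\<in>fst K\<delta>. \<forall>y\<in>fst K\<delta>. dist x y < snd K\<delta> \<longrightarrow> dhat T n x y \<le> 1 / real (Suc m))"
      by (intro exI[of _ "(K,\<delta>)"]) auto
  qed
  then obtain f where f: "\<And>m. fst (f m) \<in> sets \<mu> \<and> measure \<mu> (fst (f m)) \<ge> 1 - \<tau> / 2^(m+2) \<and> snd (f m) > 0 \<and>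
      (\<forall>n\<ge>1. \<forall>x\<in>fst (f m). \<forall>y\<in>fst (f m). dist x y < snd (f m) \<longrightarrow> dhat T n x y \<le> 1 / real (Suc m))"
    by metis
  define Kf where "Kf m = fst (f m)" for m
  define df where "df m = snd (f m)" for m
  have Kf: "\<And>m. Kf m \<in> sets \<mu>" "\<And>m. measure \<mu> (Kf m) \<ge> 1 - \<tau> / 2^(m+2)" "\<And>m. df m > 0"
    "\<And>m n x y. n \<ge> 1 \<Longrightarrow> x \<in> Kf m \<Longrightarrow> y \<in> Kf m \<Longrightarrow> dist x y < df m \<Longrightarrow> dhat T n x y \<le> 1 / real (Suc m)"
    using f unfolding Kf_def df_def by auto
  define K where "K = (\<Inter>m. Kf m)"
  have KS: "K \<in> sets \<mu>" unfolding K_def using Kf(1) by (intro sets.countable_INT) auto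
  have XK: "X - K = (\<Union>m. X - Kf m)" unfolding K_def by auto
  have cm: "measure \<mu> (X - Kf m) \<le> \<tau> / 2^(m+2)" for m
    using finite_measure.finite_measure_compl[OF fm Kf(1)[of m]] Kf(2)[of m] space_eq meas_X by simp
  have geo: "(\<lambda>m. \<tau> / 2^(m+2)) sums (\<tau> / 2)"
  proof -
    have "(\<lambda>m. (\<tau>/4) * (1/2)^m) sums ((\<tau>/4) * (1 / (1 - 1/2)))"
      by (intro sums_mult geometric_sums) auto
    moreover have "(\<lambda>m. (\<tau>/4) * (1/2::real)^m) = (\<lambda>m. \<tau> / 2^(m+2))"
      by (auto simp: power_add field_simps)
    ultimately show ?thesis by simp
  qed
  have summ: "summable (\<lambda>m. measure \<mu> (X - Kf m))"
    by (rule summable_comparison_test'[OF sums_summable[OF geo], of 0]) (use cm in auto)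
  have "measure \<mu> (X - K) \<le> (\<Sum>m. measure \<mu> (X - Kf m))"
    unfolding XK using Kf(1) space_eq
    by (intro finite_measure.finite_measure_subadditive_countably[OF fm] summ) auto
  also have "\<dots> \<le> (\<Sum>m. \<tau> / 2^(m+2))"
    by (intro suminf_le summ sums_summable[OF geo] cm)
  also have "\<dots> = \<tau> / 2" using geo sums_unique by metis
  finally have "measure \<mu> (X - K) \<le> \<tau> / 2" .
  moreover have "measure \<mu> (X - K) = 1 - measure \<mu> K"
    using finite_measure.finite_measure_compl[OF fm KS] space_eq meas_X by simp
  ultimately have mK: "measure \<mu> K > 1 - \<tau>" using tau by simp
  have "equicont_in_mean T K"
    unfolding equicont_in_mean_def
  proof (intro allI impI)
    fix \<epsilon> :: real assume e: "\<epsilon> > 0"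
    then obtain m where m: "inverse (real (Suc m)) < \<epsilon>" using reals_Archimedean by blast
    show "\<exists>\<delta>>0. \<forall>n\<ge>1. \<forall>x\<in>K. \<forall>y\<in>K. dist x y < \<delta> \<longrightarrow> dhat T n x y < \<epsilon>"
    proof (intro exI[of _ "df m"] conjI allI impI ballI)
      fix n :: nat and x y assume "1 \<le> n" "x \<in> K" "y \<in> K" "dist x y < df m"
      then have "dhat T n x y \<le> 1 / real (Suc m)" using Kf(4)[of n x m y] unfolding K_def by auto
      then show "dhat T n x y < \<epsilon>" using m by (simp add: inverse_eq_divide)
    qed (use Kf(3) in auto)
  qed
  then show "\<exists>K\<in>sets \<mu>. measure \<mu> K > 1 - \<tau> \<and> equicont_in_mean T K" using KS mK by blast
qed

lemma two_three: assumes "mu_equicont_in_mean \<mu> T" shows "mu_mean_equicont \<mu> T"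
  unfolding mu_mean_equicont_def
proof (intro allI impI)
  fix \<tau> :: real assume "\<tau> > 0"
  then obtain K where K: "K \<in> sets \<mu>" "measure \<mu> K > 1 - \<tau>" "equicont_in_mean T K"
    using assms unfolding mu_equicont_in_mean_def by blast
  have "mean_equicont T K" unfolding mean_equicont_def
  proof (intro allI impI)
    fix \<epsilon> :: real assume e: "\<epsilon> > 0"
    then obtain \<delta> where d: "\<delta> > 0" "\<forall>n\<ge>1. \<forall>x\<in>K. \<forall>y\<in>K. dist x y < \<delta> \<longrightarrow> dhat T n x y < \<epsilon>/2"
      using K(3) unfolding equicont_in_mean_def by (meson half_gt_zero)
    show "\<exists>\<delta>>0. \<forall>x\<in>K. \<forall>y\<in>K. dist x y < \<delta> \<longrightarrow> limsup (\<lambda>n. ereal (dbar T n x y)) < ereal \<epsilon>"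
    proof (intro exI[of _ \<delta>] conjI ballI impI)
      fix x y assume xy: "x \<in> K" "y \<in> K" "dist x y < \<delta>"
      have "eventually (\<lambda>n. ereal (dbar T n x y) \<le> ereal (\<epsilon>/2)) sequentially"
        unfolding eventually_sequentially
      proof (intro exI[of _ 1] allI impI)
        fix n :: nat assume n: "n \<ge> 1"
        have "dbar T n x y \<le> dhat T n x y" using n by (intro dbar_le_dhat) auto
        also have "\<dots> < \<epsilon>/2" using d xy n by auto
        finally show "ereal (dbar T n x y) \<le> ereal (\<epsilon>/2)" by simp
      qed
      then have "limsup (\<lambda>n. ereal (dbar T n x y)) \<le> ereal (\<epsilon>/2)" by (rule Limsup_bounded)
      also have "\<dots> < ereal \<epsilon>" using e by simp
      finally show "limsup (\<lambda>n. ereal (dbar T n x y)) < ereal \<epsilon>" .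
    qed (use d in auto)
  qed
  then show "\<exists>K\<in>sets \<mu>. measure \<mu> K > 1 - \<tau> \<and> mean_equicont T K" using K by blast
qed

end


context tdsm begin

lemma net_sub:
  assumes "K \<subseteq> X" "e > 0"
  shows "\<exists>P. finite P \<and> P \<subseteq> K \<and> K \<subseteq> (\<Union>x\<in>P. ball x e)"
proof -
  obtain F where F: "finite F" "F \<subseteq> X" "X \<subseteq> (\<Union>x\<in>F. ball x (e/2))"
    using seq_compact_imp_totally_bounded[OF compact_imp_seq_compact[OF cmp]] assms(2)
    by (meson half_gt_zero)
  define G where "G = {x\<in>F. \<exists>y\<in>K. dist x y < e/2}"
  define p where "p x = (SOME y. y \<in> K \<and> dist x y < e/2)" for x
  have p: "p x \<in> K \<and> dist x (p x) < e/2" if "x \<in> G" for x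
    using that unfolding G_def p_def by (metis (mono_tags, lifting) mem_Collect_eq someI)
  show ?thesis
  proof (intro exI[of _ "p ` G"] conjI)
    show "finite (p ` G)" using F(1) unfolding G_def by auto
    show "p ` G \<subseteq> K" using p by auto
    show "K \<subseteq> (\<Union>x\<in>p ` G. ball x e)"
    proof
      fix y assume y: "y \<in> K"
      then obtain x where x: "x \<in> F" "dist x y < e/2" using F(3) assms(1) by auto
      then have xG: "x \<in> G" unfolding G_def using y by auto
      have "dist (p x) y \<le> dist (p x) x + dist x y" by (rule dist_triangle)
      also have "\<dots> < e" using p[OF xG] x by (simp add: dist_commute)
      finally show "y \<in> (\<Union>x\<in>p ` G. ball x e)" using xG by auto
    qed
  qed
qed

lemma meas_ball_hat: "n \<ge> 1 \<Longrightarrow> ball_hat X T n x e \<in> sets \<mu>"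
  unfolding ball_hat_def by (rule meas_dhat_lt)

lemma meas_UN_ball_hat: "n \<ge> 1 \<Longrightarrow> finite F \<Longrightarrow> (\<Union>x\<in>F. ball_hat X T n x e) \<in> sets \<mu>"
  by (intro sets.finite_UN meas_ball_hat) auto

lemma span_exists:
  assumes "n \<ge> 1" "\<epsilon> > 0"
  shows "\<exists>k F. finite F \<and> F \<subseteq> X \<and> card F = k \<and> measure \<mu> (\<Union>x\<in>F. ball_hat X T n x \<epsilon>) > 1 - \<epsilon>"
proof -
  obtain r where r: "r > 0" "\<forall>x\<in>X. \<forall>y\<in>X. dist x y < r \<longrightarrow> dhat T n x y < \<epsilon>"
    using UC_dhat[OF assms(2,1)] by blast
  obtain F where F: "finite F" "F \<subseteq> X" "X \<subseteq> (\<Union>x\<in>F. ball x r)"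
    using net_sub[of X r] r(1) by auto
  have "(\<Union>x\<in>F. ball_hat X T n x \<epsilon>) = X"
  proof
    show "(\<Union>x\<in>F. ball_hat X T n x \<epsilon>) \<subseteq> X" unfolding ball_hat_def by auto
    show "X \<subseteq> (\<Union>x\<in>F. ball_hat X T n x \<epsilon>)"
    proof
      fix y assume y: "y \<in> X"
      then obtain x where "x \<in> F" "dist x y < r" using F(3) by auto
      then show "y \<in> (\<Union>x\<in>F. ball_hat X T n x \<epsilon>)" using r F(2) y unfolding ball_hat_def by blast
    qed
  qed
  then show ?thesis using F meas_X assms by auto
qed

lemma span_witness:
  assumes "n \<ge> 1" "\<epsilon> > 0"
  shows "\<exists>F. finite F \<and> F \<subseteq> X \<and> card F = span_hat \<mu> X T n \<epsilon> \<and> measure \<mu> (\<Union>x\<in>F. ball_hat X T n x \<epsilon>) > 1 - \<epsilon>"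
  unfolding span_hat_def by (rule LeastI_ex) (use span_exists[OF assms] in blast)

lemma span_le:
  assumes "finite F" "F \<subseteq> X" "measure \<mu> (\<Union>x\<in>F. ball_hat X T n x \<epsilon>) > 1 - \<epsilon>"
  shows "span_hat \<mu> X T n \<epsilon> \<le> card F"
  unfolding span_hat_def by (rule Least_le) (use assms in blast)

lemma two_one: assumes "mu_equicont_in_mean \<mu> T" shows "bounded_complexity \<mu> X T"
  unfolding bounded_complexity_def
proof (intro allI impI)
  fix \<epsilon> :: real assume e: "\<epsilon> > 0"
  then obtain K where K: "K \<in> sets \<mu>" "measure \<mu> K > 1 - \<epsilon>" "equicont_in_mean T K"
    using assms unfolding mu_equicont_in_mean_def by blast
  then obtain \<delta> where d: "\<delta> > 0" "\<forall>n\<ge>1. \<forall>x\<in>K. \<forall>y\<in>K. dist x y < \<delta> \<longrightarrow> dhat T n x y < \<epsilon>"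
    using e unfolding equicont_in_mean_def by blast
  obtain P where P: "finite P" "P \<subseteq> K" "K \<subseteq> (\<Union>x\<in>P. ball x \<delta>)"
    using net_sub[OF sets_sub[OF K(1)] d(1)] by auto
  have PX: "P \<subseteq> X" using P(2) sets_sub[OF K(1)] by auto
  show "\<exists>C. C > 0 \<and> (\<forall>n\<ge>1. span_hat \<mu> X T n \<epsilon> \<le> C)"
  proof (intro exI[of _ "card P + 1"] conjI allI impI)
    fix n :: nat assume n: "n \<ge> 1"
    have sub: "K \<subseteq> (\<Union>x\<in>P. ball_hat X T n x \<epsilon>)"
    proof
      fix y assume y: "y \<in> K"
      then obtain x where "x \<in> P" "dist x y < \<delta>" using P(3) by auto
      then show "y \<in> (\<Union>x\<in>P. ball_hat X T n x \<epsilon>)"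
        using d(2) n P(2) y sets_sub[OF K(1)] unfolding ball_hat_def by blast
    qed
    have "measure \<mu> K \<le> measure \<mu> (\<Union>x\<in>P. ball_hat X T n x \<epsilon>)"
      by (intro finite_measure.finite_measure_mono[OF fm] sub meas_UN_ball_hat n P(1))
    then have "span_hat \<mu> X T n \<epsilon> \<le> card P" using K(2) by (intro span_le P(1) PX) auto
    then show "span_hat \<mu> X T n \<epsilon> \<le> card P + 1" by simp
  qed simp
qed

end


context tdsm begin

lemma three_two: assumes "mu_mean_equicont \<mu> T" shows "mu_equicont_in_mean \<mu> T"
proof (rule lemA)
  fix \<epsilon> \<eta> :: real assume e: "\<epsilon> > 0" and eta: "\<eta> > 0"
  define e where "e = \<epsilon>/2"
  have e0: "e > 0" using e unfolding e_def by simp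
  obtain K where K: "K \<in> sets \<mu>" "measure \<mu> K > 1 - \<eta>/2" "mean_equicont T K"
    using assms eta unfolding mu_mean_equicont_def by (meson half_gt_zero)
  have KX: "K \<subseteq> X" using sets_sub[OF K(1)] .
  obtain \<delta> where d: "\<delta> > 0" "\<forall>x\<in>K. \<forall>y\<in>K. dist x y < \<delta> \<longrightarrow> limsup (\<lambda>n. ereal (dbar T n x y)) < ereal e"
    using K(3) e0 unfolding mean_equicont_def by blast
  obtain P where P: "finite P" "P \<subseteq> K" "K \<subseteq> (\<Union>x\<in>P. ball x (\<delta>/2))"
    using net_sub[OF KX, of "\<delta>/2"] d(1) by auto
  define H where "H N = {y\<in>K. \<forall>x\<in>P. dist x y < \<delta> \<longrightarrow> (\<forall>n\<ge>N. dbar T n x y < e)}" for N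
  have HS: "H N \<in> sets \<mu>" for N
  proof -
    define A where "A x = {y\<in>X. \<delta> \<le> dist x y} \<union> (\<Inter>n\<in>{N..}. {y\<in>X. dbar T n x y < e})" for x
    have A: "A x \<in> sets \<mu>" for x
      unfolding A_def
    proof (intro sets.Un sets.countable_INT meas_ge)
      show "continuous_on X (dist x)" by (intro continuous_on_dist continuous_on_const continuous_on_id)
      show "(\<lambda>n. {y \<in> X. dbar T n x y < e}) ` {N..} \<subseteq> sets \<mu>" using meas_lt[OF cont_dbar] by auto
    qed auto
    have eq: "H N = K \<inter> (\<Inter>x\<in>P. A x)"
    proof (intro set_eqI iffI)
      fix y assume "y \<in> H N" then show "y \<in> K \<inter> (\<Inter>x\<in>P. A x)"
        using KX unfolding H_def A_def by (auto simp: not_less)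
    next
      fix y assume y: "y \<in> K \<inter> (\<Inter>x\<in>P. A x)"
      show "y \<in> H N" unfolding H_def
      proof (intro CollectI conjI ballI impI allI)
        show "y \<in> K" using y by blast
        fix x n assume "x \<in> P" "dist x y < \<delta>" "N \<le> n"
        then show "dbar T n x y < e" using y unfolding A_def by fastforce
      qed
    qed
    show ?thesis
    proof (cases "P = {}")
      case True then show ?thesis using eq K(1) by simp
    next
      case False then show ?thesis unfolding eq using A K(1) P(1) by (intro sets.Int sets.finite_INT) auto
    qed
  qed
  have inc: "incseq H"
  proof (rule incseq_SucI)
    fix N show "H N \<subseteq> H (Suc N)" unfolding H_def by (auto simp del: dist_commute)
  qed
  have UH: "(\<Union>N. H N) = K"
  proof
    show "(\<Union>N. H N) \<subseteq> K" unfolding H_def by blast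
    show "K \<subseteq> (\<Union>N. H N)"
    proof
      fix y assume y: "y \<in> K"
      have "\<forall>x\<in>P. eventually (\<lambda>n. dist x y < \<delta> \<longrightarrow> dbar T n x y < e) sequentially"
      proof
        fix x assume x: "x \<in> P"
        show "eventually (\<lambda>n. dist x y < \<delta> \<longrightarrow> dbar T n x y < e) sequentially"
        proof (cases "dist x y < \<delta>")
          case True
          have xK: "x \<in> K" using x P(2) by blast
          have "limsup (\<lambda>n. ereal (dbar T n x y)) < ereal e" using d(2) xK y True by simp
          then have "eventually (\<lambda>n. ereal (dbar T n x y) < ereal e) sequentially" by (rule Limsup_lessD)
          then show ?thesis by (rule eventually_mono) simp
        next
          case False then show ?thesis by (intro always_eventually) simp
        qed
      qed
      then have "eventually (\<lambda>n. \<forall>x\<in>P. dist x y < \<delta> \<longrightarrow> dbar T n x y < e) sequentially"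
        by (rule eventually_ball_finite[OF P(1)])
      then obtain N where "\<forall>n\<ge>N. \<forall>x\<in>P. dist x y < \<delta> \<longrightarrow> dbar T n x y < e"
        unfolding eventually_sequentially by blast
      then have "y \<in> H N" using y unfolding H_def by simp
      then show "y \<in> (\<Union>N. H N)" by blast
    qed
  qed
  have "(\<lambda>N. measure \<mu> (H N)) \<longlonglongrightarrow> measure \<mu> K"
    using finite_measure.finite_Lim_measure_incseq[OF fm _ inc] HS UH by auto
  then have "eventually (\<lambda>N. measure \<mu> (H N) > measure \<mu> K - \<eta>/2) sequentially"
    using eta by (intro order_tendstoD(1)) auto
  then obtain N where N: "measure \<mu> (H N) > measure \<mu> K - \<eta>/2"
    unfolding eventually_sequentially by blast
  obtain \<rho> where rho: "\<rho> > 0" "\<forall>x\<in>X. \<forall>y\<in>X. dist x y < \<rho> \<longrightarrow> (\<forall>i<N. dist ((T ^^ i) x) ((T ^^ i) y) < e)"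
    using UC_iter[OF e0, of N] by blast
  show "\<exists>K\<in>sets \<mu>. measure \<mu> K \<ge> 1 - \<eta> \<and>
      (\<exists>\<delta>>0. \<forall>n\<ge>1. \<forall>x\<in>K. \<forall>y\<in>K. dist x y < \<delta> \<longrightarrow> dhat T n x y \<le> \<epsilon>)"
  proof (intro bexI[of _ "H N"] conjI exI[of _ "min (\<delta>/2) \<rho>"] allI impI ballI)
    show "measure \<mu> (H N) \<ge> 1 - \<eta>" using N K(2) by simp
    show "min (\<delta>/2) \<rho> > 0" using d(1) rho(1) by simp
    fix n :: nat and y y' assume n: "n \<ge> 1" and y: "y \<in> H N" and y': "y' \<in> H N"
      and dy: "dist y y' < min (\<delta>/2) \<rho>"
    have yK: "y \<in> K" "y' \<in> K" using y y' unfolding H_def by auto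
    show "dhat T n y y' \<le> \<epsilon>"
      unfolding dhat_le_iff[OF n]
    proof
      fix k assume k: "k \<in> {1..n}"
      show "dbar T k y y' \<le> \<epsilon>"
      proof (cases "k < N")
        case True
        have yX: "y \<in> X" "y' \<in> X" using yK KX by auto
        have "dist y y' < \<rho>" using dy by simp
        then have "\<forall>i<N. dist ((T ^^ i) y) ((T ^^ i) y') < e" using rho(2) yX by blast
        then have "\<forall>i<k. dist ((T ^^ i) y) ((T ^^ i) y') < e" using True by simp
        then have "dbar T k y y' < e" using k by (intro dbar_lt) auto
        then show ?thesis using e unfolding e_def by simp
      next
        case False
        obtain x where x: "x \<in> P" "dist x y < \<delta>/2" using P(3) yK(1) by auto
        have "dist x y' \<le> dist x y + dist y y'" by (rule dist_triangle)
        also have "\<dots> < \<delta>" using x dy by simp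
        finally have xy': "dist x y' < \<delta>" .
        have kN: "N \<le> k" using False by simp
        have xd: "dist x y < \<delta>" using x(2) d(1) by simp
        have a: "dbar T k x y < e" using y x(1) xd kN unfolding H_def by blast
        have b: "dbar T k x y' < e" using y' x(1) xy' kN unfolding H_def by blast
        have "dbar T k y y' \<le> dbar T k y x + dbar T k x y'" by (rule dbar_triangle)
        also have "\<dots> < \<epsilon>" using a b unfolding e_def by (simp add: dbar_sym)
        finally show ?thesis by simp
      qed
    qed
  qed (rule HS)
qed

end


lemma pad_lemma:
  assumes "finite F" "card F \<le> C" "C > 0" "x0 \<in> X" "F \<subseteq> X"
  shows "\<exists>g. (\<forall>j. g j \<in> X) \<and> F \<subseteq> g ` {..<C}"
proof -
  obtain xs where xs: "set xs = F" "distinct xs" using assms(1) finite_distinct_list by blast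
  have len: "length xs \<le> C" using xs assms(2) distinct_card by fastforce
  define g where "g j = (if j < length xs then xs ! j else x0)" for j
  show ?thesis
  proof (intro exI[of _ g] conjI allI)
    fix j show "g j \<in> X" unfolding g_def using xs(1) assms(4,5) nth_mem by auto
  next
    show "F \<subseteq> g ` {..<C}"
    proof
      fix x assume "x \<in> F"
      then obtain j where "j < length xs" "xs ! j = x" using xs(1) by (metis in_set_conv_nth)
      then show "x \<in> g ` {..<C}" using len unfolding g_def by (intro image_eqI[of _ _ j]) auto
    qed
  qed
qed

lemma subseq_lemma:
  fixes f :: "nat \<Rightarrow> nat \<Rightarrow> 'a::metric_space"
  assumes "seq_compact X" "\<And>n j. f n j \<in> X"
  shows "\<exists>r z. strict_mono r \<and> (\<forall>j. z j \<in> X) \<and> (\<forall>j<C. (\<lambda>k. f (r k) j) \<longlonglongrightarrow> z j)"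
proof (induction C)
  case 0 then show ?case using assms(2) by (intro exI[of _ id] exI[of _ "f 0"]) (auto simp: strict_mono_def)
next
  case (Suc C)
  then obtain r z where rz: "strict_mono r" "\<forall>j. z j \<in> X" "\<forall>j<C. (\<lambda>k. f (r k) j) \<longlonglongrightarrow> z j" by blast
  have "\<forall>k. f (r k) C \<in> X" using assms(2) by blast
  from seq_compactE[OF assms(1) this] obtain l r2 where l: "l \<in> X" "strict_mono r2"
    "((\<lambda>k. f (r k) C) \<circ> r2) \<longlonglongrightarrow> l" by blast
  show ?case
  proof (intro exI[of _ "r \<circ> r2"] exI[of _ "z(C := l)"] conjI allI impI)
    show "strict_mono (r \<circ> r2)" using rz(1) l(2) by (rule strict_mono_o)
    fix j show "(z(C := l)) j \<in> X" using rz(2) l(1) by auto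
  next
    fix j assume j: "j < Suc C"
    show "(\<lambda>k. f ((r \<circ> r2) k) j) \<longlonglongrightarrow> (z(C := l)) j"
    proof (cases "j = C")
      case True then show ?thesis using l(3) by (simp add: o_def)
    next
      case False
      then have "(\<lambda>k. f (r k) j) \<longlonglongrightarrow> z j" using rz(3) j by auto
      from LIMSEQ_subseq_LIMSEQ[OF this l(2)] show ?thesis using False by (simp add: o_def)
    qed
  qed
qed

context tdsm begin

lemma one_two: assumes "bounded_complexity \<mu> X T" shows "mu_equicont_in_mean \<mu> T"
proof (rule lemA)
  fix \<epsilon> \<eta> :: real assume eps: "\<epsilon> > 0" and eta: "\<eta> > 0"
  define e where "e = min (\<epsilon>/8) \<eta>"
  have e0: "e > 0" using eps eta unfolding e_def by simp
  obtain C :: nat where C: "C > 0" "\<forall>n\<ge>1. span_hat \<mu> X T n e \<le> C"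
    using assms e0 unfolding bounded_complexity_def by blast
  have "X \<noteq> {}" using meas_X by auto
  then obtain x0 where x0: "x0 \<in> X" by blast
  have "\<forall>n. \<exists>g. (\<forall>j. g j \<in> X) \<and> measure \<mu> (\<Union>j<C. ball_hat X T (Suc n) (g j) e) > 1 - e"
  proof
    fix n
    obtain F where F: "finite F" "F \<subseteq> X" "card F = span_hat \<mu> X T (Suc n) e"
      "measure \<mu> (\<Union>x\<in>F. ball_hat X T (Suc n) x e) > 1 - e"
      using span_witness[of "Suc n" e] e0 by auto
    have "card F \<le> C" using F(3) C(2) by auto
    then obtain g where g: "\<forall>j. g j \<in> X" "F \<subseteq> g ` {..<C}"
      using pad_lemma[OF F(1) _ C(1) x0 F(2)] by blast
    have "(\<Union>x\<in>F. ball_hat X T (Suc n) x e) \<subseteq> (\<Union>j<C. ball_hat X T (Suc n) (g j) e)"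
      using g(2) by blast
    then have "measure \<mu> (\<Union>x\<in>F. ball_hat X T (Suc n) x e) \<le> measure \<mu> (\<Union>j<C. ball_hat X T (Suc n) (g j) e)"
      by (intro finite_measure.finite_measure_mono[OF fm] sets.finite_UN meas_ball_hat) auto
    then show "\<exists>g. (\<forall>j. g j \<in> X) \<and> measure \<mu> (\<Union>j<C. ball_hat X T (Suc n) (g j) e) > 1 - e"
      using g(1) F(4) by (intro exI[of _ g]) auto
  qed
  then obtain G where G: "\<And>n j. G n j \<in> X" "\<And>n. measure \<mu> (\<Union>j<C. ball_hat X T (Suc n) (G n j) e) > 1 - e"
    by metis
  obtain r z where rz: "strict_mono r" "\<And>j. z j \<in> X" "\<And>j. j < C \<Longrightarrow> (\<lambda>k. G (r k) j) \<longlonglongrightarrow> z j"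
    using subseq_lemma[where f=G and C=C, OF compact_imp_seq_compact[OF cmp] G(1)] by blast
  define A where "A m = (\<Union>j<C. {y\<in>X. dhat T (Suc m) (z j) y \<le> 2*e})" for m
  have AS: "A m \<in> sets \<mu>" for m unfolding A_def by (intro sets.finite_UN meas_dhat_le) auto
  have Adec: "A m' \<subseteq> A m" if "m \<le> m'" for m m'
  proof
    fix y assume "y \<in> A m'"
    then obtain j where j: "j < C" "y \<in> X" "dhat T (Suc m') (z j) y \<le> 2*e" unfolding A_def by blast
    have "dhat T (Suc m) (z j) y \<le> dhat T (Suc m') (z j) y" using that by (intro dhat_mono) auto
    then have "dhat T (Suc m) (z j) y \<le> 2*e" using j(3) by linarith
    then show "y \<in> A m" using j unfolding A_def by auto
  qed
  have Ameas: "measure \<mu> (A m) > 1 - e" for m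
  proof -
    obtain \<rho> where rho: "\<rho> > 0" "\<forall>x\<in>X. \<forall>y\<in>X. dist x y < \<rho> \<longrightarrow> dhat T (Suc m) x y < e"
      using UC_dhat[OF e0, of "Suc m"] by auto
    have "\<forall>j\<in>{..<C}. eventually (\<lambda>k. dist (G (r k) j) (z j) < \<rho>) sequentially"
      using rz(3) rho(1) by (auto intro: tendstoD)
    then have ev: "eventually (\<lambda>k. \<forall>j\<in>{..<C}. dist (G (r k) j) (z j) < \<rho>) sequentially"
      by (rule eventually_ball_finite[OF finite_lessThan])
    then obtain k0 where k0: "\<forall>k\<ge>k0. \<forall>j\<in>{..<C}. dist (G (r k) j) (z j) < \<rho>"
      unfolding eventually_sequentially by blast
    define k where "k = max k0 m"
    have kk: "\<forall>j<C. dist (G (r k) j) (z j) < \<rho>" using k0 unfolding k_def by auto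
    have mk: "m \<le> r k" using seq_suble[OF rz(1), of k] unfolding k_def by linarith
    have sub: "(\<Union>j<C. ball_hat X T (Suc (r k)) (G (r k) j) e) \<subseteq> A m"
    proof
      fix y assume "y \<in> (\<Union>j<C. ball_hat X T (Suc (r k)) (G (r k) j) e)"
      then obtain j where j: "j < C" "y \<in> X" "dhat T (Suc (r k)) (G (r k) j) y < e"
        unfolding ball_hat_def by blast
      have a: "dhat T (Suc m) (G (r k) j) y < e"
        using dhat_mono[of "Suc m" "Suc (r k)" T "G (r k) j" y] mk j(3) by simp
      have b: "dhat T (Suc m) (z j) (G (r k) j) < e"
        using rho(2) rz(2)[of j] G(1)[of "r k" j] kk j(1) by (simp add: dist_commute)
      have "dhat T (Suc m) (z j) y \<le> dhat T (Suc m) (z j) (G (r k) j) + dhat T (Suc m) (G (r k) j) y"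
        by (rule dhat_triangle) simp
      then have "dhat T (Suc m) (z j) y \<le> 2*e" using a b by simp
      then show "y \<in> A m" using j unfolding A_def by auto
    qed
    have "measure \<mu> (\<Union>j<C. ball_hat X T (Suc (r k)) (G (r k) j) e) \<le> measure \<mu> (A m)"
      by (intro finite_measure.finite_measure_mono[OF fm] sub AS)
    then show ?thesis using G(2)[of "r k"] by simp
  qed
  define E where "E = (\<Inter>m. A m)"
  have ES: "E \<in> sets \<mu>" unfolding E_def using AS by (intro sets.countable_INT) auto
  have "(\<lambda>m. measure \<mu> (A m)) \<longlonglongrightarrow> measure \<mu> E"
    unfolding E_def
    by (intro finite_measure.finite_Lim_measure_decseq[OF fm]) (use AS Adec in \<open>auto simp: monotone_on_def\<close>)
  then have mE: "measure \<mu> E \<ge> 1 - e"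
    by (rule LIMSEQ_le_const) (use Ameas less_imp_le in blast)
  define D where "D j = {y\<in>X. \<forall>m. dhat T (Suc m) (z j) y \<le> 2*e}" for j
  have DX: "D j \<subseteq> X" for j unfolding D_def by auto
  have Db: "dhat T n (z j) y \<le> 2*e" if "y \<in> D j" "n \<ge> 1" for y j n
  proof -
    have "n = Suc (n - 1)" using that(2) by simp
    then show ?thesis using that(1) unfolding D_def by (metis (mono_tags, lifting) mem_Collect_eq)
  qed
  have ED: "\<exists>j<C. y \<in> D j" if y: "y \<in> E" for y
  proof (rule ccontr)
    assume "\<not> (\<exists>j<C. y \<in> D j)"
    have yX: "y \<in> X" using y unfolding E_def A_def by blast
    have "\<forall>j<C. \<exists>m. dhat T (Suc m) (z j) y > 2*e"
      using \<open>\<not> (\<exists>j<C. y \<in> D j)\<close> yX unfolding D_def by (auto simp: not_le)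
    then obtain M where M: "\<And>j. j < C \<Longrightarrow> dhat T (Suc (M j)) (z j) y > 2*e" by metis
    define Mx where "Mx = Max (M ` {..<C})"
    have "y \<in> A Mx" using y unfolding E_def by blast
    then obtain j where j: "j < C" "dhat T (Suc Mx) (z j) y \<le> 2*e" unfolding A_def by blast
    have "M j \<le> Mx" unfolding Mx_def using j(1) by (intro Max_ge) auto
    then have "dhat T (Suc (M j)) (z j) y \<le> dhat T (Suc Mx) (z j) y" by (intro dhat_mono) auto
    then show False using M[OF j(1)] j(2) by simp
  qed
  have pair: "\<exists>\<delta>>0. \<forall>y\<in>D i. \<forall>y'\<in>D j. dist y y' < \<delta> \<longrightarrow> (\<forall>n\<ge>1. dhat T n y y' \<le> 8*e)" for i j
  proof (cases "\<forall>\<delta>>0. \<exists>w\<in>D i. \<exists>w'\<in>D j. dist w w' < \<delta>")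
    case True
    show ?thesis
    proof (intro exI[of _ 1] conjI ballI impI allI)
      fix y y' and n :: nat assume y: "y \<in> D i" and y': "y' \<in> D j" and n: "n \<ge> 1"
      show "dhat T n y y' \<le> 8*e"
      proof (rule field_le_epsilon)
        fix e' :: real assume e': "e' > 0"
        obtain \<rho> where rho: "\<rho> > 0" "\<forall>x\<in>X. \<forall>y\<in>X. dist x y < \<rho> \<longrightarrow> dhat T n x y < e'"
          using UC_dhat[OF e' n] by auto
        obtain w w' where w: "w \<in> D i" "w' \<in> D j" "dist w w' < \<rho>" using True rho(1) by blast
        have ww: "dhat T n w w' < e'" using rho(2) w DX by blast
        have t1: "dhat T n y y' \<le> dhat T n y (z i) + dhat T n (z i) y'" by (rule dhat_triangle[OF n])
        have t2: "dhat T n (z i) y' \<le> dhat T n (z i) w + dhat T n w y'" by (rule dhat_triangle[OF n])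
        have t3: "dhat T n w y' \<le> dhat T n w w' + dhat T n w' y'" by (rule dhat_triangle[OF n])
        have t4: "dhat T n w' y' \<le> dhat T n w' (z j) + dhat T n (z j) y'" by (rule dhat_triangle[OF n])
        have b1: "dhat T n y (z i) \<le> 2*e" using Db[OF y n] by (simp add: dhat_sym)
        have b2: "dhat T n (z i) w \<le> 2*e" using Db[OF w(1) n] .
        have b3: "dhat T n w' (z j) \<le> 2*e" using Db[OF w(2) n] by (simp add: dhat_sym)
        have b4: "dhat T n (z j) y' \<le> 2*e" using Db[OF y' n] .
        show "dhat T n y y' \<le> 8*e + e'" using t1 t2 t3 t4 b1 b2 b3 b4 ww by linarith
      qed
    qed simp
  next
    case False
    then obtain \<delta> where "\<delta> > 0" "\<forall>w\<in>D i. \<forall>w'\<in>D j. \<not> dist w w' < \<delta>" by blast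
    then show ?thesis by blast
  qed
  define PP where "PP = {..<C} \<times> {..<C}"
  have "\<forall>p\<in>PP. \<exists>\<delta>>0. \<forall>y\<in>D (fst p). \<forall>y'\<in>D (snd p). dist y y' < \<delta> \<longrightarrow> (\<forall>n\<ge>1. dhat T n y y' \<le> 8*e)"
    using pair by blast
  then obtain df where df: "\<And>p. p \<in> PP \<Longrightarrow> df p > 0 \<and> (\<forall>y\<in>D (fst p). \<forall>y'\<in>D (snd p). dist y y' < df p \<longrightarrow> (\<forall>n\<ge>1. dhat T n y y' \<le> 8*e))"
    by metis
  define \<delta> where "\<delta> = Min (insert 1 (df ` PP))"
  have finPP: "finite PP" unfolding PP_def by simp
  have d0: "\<delta> > 0" unfolding \<delta>_def using df finPP by (subst Min_gr_iff) auto
  have dle: "\<delta> \<le> df p" if "p \<in> PP" for p unfolding \<delta>_def using that finPP by (intro Min_le) auto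
  show "\<exists>K\<in>sets \<mu>. measure \<mu> K \<ge> 1 - \<eta> \<and>
      (\<exists>\<delta>>0. \<forall>n\<ge>1. \<forall>x\<in>K. \<forall>y\<in>K. dist x y < \<delta> \<longrightarrow> dhat T n x y \<le> \<epsilon>)"
  proof (intro bexI[of _ E] conjI exI[of _ \<delta>] allI impI ballI)
    show "measure \<mu> E \<ge> 1 - \<eta>" using mE unfolding e_def by simp
    show "\<delta> > 0" by (rule d0)
    fix n :: nat and y y' assume n: "n \<ge> 1" and y: "y \<in> E" and y': "y' \<in> E" and d: "dist y y' < \<delta>"
    obtain i where i: "i < C" "y \<in> D i" using ED[OF y] by blast
    obtain j where j: "j < C" "y' \<in> D j" using ED[OF y'] by blast
    have p: "(i,j) \<in> PP" unfolding PP_def using i j by simp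
    have "dist y y' < df (i,j)" using d dle[OF p] by simp
    then have "dhat T n y y' \<le> 8*e" using df[OF p] i(2) j(2) n by simp
    then show "dhat T n y y' \<le> \<epsilon>" unfolding e_def by simp
  qed (rule ES)
qed

end

theorem mainTheorem8:
  fixes X :: "'a::metric_space set" and T :: "'a \<Rightarrow> 'a" and \<mu> :: "'a measure"
  assumes "tds X T"
    and "prob_space \<mu>"
    and "sets \<mu> = sets (restrict_space borel X)"
    and "space \<mu> = X"
    and "invariant_measure \<mu> T"
  shows "(bounded_complexity \<mu> X T \<longleftrightarrow> mu_equicont_in_mean \<mu> T)
       \<and> (mu_equicont_in_mean \<mu> T \<longleftrightarrow> mu_mean_equicont \<mu> T)"
proof -
  interpret tdsm X T \<mu> using assms(1-4) by (simp add: tdsm_def)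
  show ?thesis using one_two two_one two_three three_two by blast
qed

end
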